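(* Let $\mathcal{F}$ be a finite field, $n$ a positive integer not divisible by the characteristic of $\mathcal{F}$, $\omega\in\mathcal{F}$ a primitive $n$-th root of unity, and $F_n=(\omega^{jk})_{0\le j,k\le n-1}$ with rows $e_0,\dots,e_{n-1}$. Let $r$ be an integer with $\frac n2<r\le n$. Then the code generated by the $(2(n-r)+1)\times n$ matrix with rows $e_r,e_{r+1},\dots,e_{n-1},e_0,e_1,\dots,e_{n-r}$ is a linear complementary dual maximum distance separable code, with parameters $[n,\,2(n-r)+1,\,2r-n]$; its dual code is generated by the remaining rows $e_{n-r+1},\dots,e_{r-1}$.
   Context: Duals are with respect to the standard bilinear form $x\cdot y=\sum x_iy_i$. A code $\mathcal{C}$ is LCD if $\mathcal{C}\cap\mathcal{C}^\perp=0$. An $[n,k,d]$ linear code is mds if $d=n-k+1$. *)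

theory Defs
  imports Main
begin

definition words :: "nat \<Rightarrow> (nat \<Rightarrow> 'a::field) set" where
  "words n = {v. \<forall>i\<ge>n. v i = 0}"

definition lin_span :: "(nat \<Rightarrow> 'a::field) set \<Rightarrow> (nat \<Rightarrow> 'a) set" where
  "lin_span G = {v. \<exists>c. v = (\<lambda>i. \<Sum>g\<in>G. c g * g i)}"

definition lin_indep :: "(nat \<Rightarrow> 'a::field) set \<Rightarrow> bool" where
  "lin_indep B \<longleftrightarrow> (\<forall>c. (\<forall>i. (\<Sum>g\<in>B. c g * g i) = 0) \<longrightarrow> (\<forall>g\<in>B. c g = 0))"

definition code_dim :: "(nat \<Rightarrow> 'a::field) set \<Rightarrow> nat \<Rightarrow> bool" where
  "code_dim C k \<longleftrightarrow> (\<exists>B. finite B \<and> card B = k \<and> B \<subseteq> C \<and> lin_indep B \<and> lin_span B = C)"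

definition hamming_dist :: "nat \<Rightarrow> (nat \<Rightarrow> 'a) \<Rightarrow> (nat \<Rightarrow> 'a) \<Rightarrow> nat" where
  "hamming_dist n v w = card {i. i < n \<and> v i \<noteq> w i}"

definition min_dist :: "nat \<Rightarrow> (nat \<Rightarrow> 'a) set \<Rightarrow> nat" where
  "min_dist n C = Min {hamming_dist n v w | v w. v \<in> C \<and> w \<in> C \<and> v \<noteq> w}"

definition dual_code :: "nat \<Rightarrow> (nat \<Rightarrow> 'a::field) set \<Rightarrow> (nat \<Rightarrow> 'a) set" where
  "dual_code n C = {v \<in> words n. \<forall>c\<in>C. (\<Sum>i<n. v i * c i) = 0}"

definition is_LCD :: "nat \<Rightarrow> (nat \<Rightarrow> 'a::field) set \<Rightarrow> bool" where
  "is_LCD n C \<longleftrightarrow> C \<inter> dual_code n C = {\<lambda>_. 0}"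

definition is_MDS :: "nat \<Rightarrow> (nat \<Rightarrow> 'a::field) set \<Rightarrow> bool" where
  "is_MDS n C \<longleftrightarrow> (\<exists>k. code_dim C k \<and> min_dist n C = n - k + 1)"

definition primitive_root :: "nat \<Rightarrow> 'a::field \<Rightarrow> bool" where
  "primitive_root n w \<longleftrightarrow> w ^ n = 1 \<and> (\<forall>k. 0 < k \<and> k < n \<longrightarrow> w ^ k \<noteq> 1)"

definition fourier_row :: "'a::field \<Rightarrow> nat \<Rightarrow> nat \<Rightarrow> (nat \<Rightarrow> 'a)" where
  "fourier_row w n j = (\<lambda>k. if k < n then w ^ (j * k) else 0)"

end

theory Submission
  imports Defs "HOL-Computational_Algebra.Polynomial"
begin

lemma geom_unity:
  fixes x :: "'a::field"
  assumes "x ^ n = 1"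
  shows "(\<Sum>k<n. x ^ k) = (if x = 1 then of_nat n else 0)"
  using assms by (auto simp: geometric_sum)

locale fr =
  fixes w :: "'a::field" and n :: nat
  assumes npos: "0 < n" and nz: "of_nat n \<noteq> (0::'a)" and prim: "primitive_root n w"
begin

definition e :: "nat \<Rightarrow> nat \<Rightarrow> 'a" where "e j = fourier_row w n j"
definition dot :: "(nat \<Rightarrow> 'a) \<Rightarrow> (nat \<Rightarrow> 'a) \<Rightarrow> 'a" where
  "dot u v = (\<Sum>k<n. u k * v k)"
definition comb :: "nat set \<Rightarrow> (nat \<Rightarrow> 'a) \<Rightarrow> nat \<Rightarrow> 'a" where
  "comb I a = (\<lambda>k. \<Sum>j\<in>I. a j * e j k)"
definition neg :: "nat \<Rightarrow> nat" where "neg j = (n - j) mod n"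

lemma wn: "w ^ n = 1" using prim by (simp add: primitive_root_def)

lemma w_nz: "w \<noteq> 0" using wn npos by (metis power_0_left zero_neq_one not_gr0)

lemma w_pow_mod: "w ^ a = w ^ (a mod n)"
proof -
  have "w ^ a = w ^ (n * (a div n) + a mod n)" by simp
  also have "\<dots> = (w ^ n) ^ (a div n) * w ^ (a mod n)" by (simp only: power_add power_mult)
  also have "\<dots> = w ^ (a mod n)" by (simp add: wn)
  finally show ?thesis .
qed

lemma w_pow_eq1: "w ^ a = 1 \<longleftrightarrow> n dvd a"
proof
  assume "w ^ a = 1"
  hence "w ^ (a mod n) = 1" by (simp add: w_pow_mod[symmetric])
  moreover have "a mod n < n" using npos by simp
  ultimately have "a mod n = 0" using prim unfolding primitive_root_def by auto
  thus "n dvd a" by auto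
next
  assume "n dvd a" thus "w ^ a = 1" by (auto simp: power_mult wn)
qed

lemma w_pow_inj: assumes "k < n" "l < n" "w ^ k = w ^ l" shows "k = l"
proof -
  { fix k l :: nat assume kl: "k \<le> l" "l < n" "w ^ k = w ^ l"
    have "w ^ l = w ^ (k + (l - k))" using kl by simp
    hence "w ^ l = w ^ k * w ^ (l - k)" by (simp only: power_add)
    hence "w ^ (l - k) = 1" using kl w_nz by simp
    hence "n dvd (l - k)" by (simp add: w_pow_eq1)
    hence "k = l" using kl by (metis diff_is_0_eq dvd_imp_le le_antisym not_gr0 diff_le_self le_less_trans less_irrefl) }
  thus ?thesis using assms by (metis nat_le_linear)
qed

lemma dot_e: "dot (e j) (e m) = (if n dvd (j + m) then of_nat n else 0)"
proof -
  have "dot (e j) (e m) = (\<Sum>k<n. (w ^ (j + m)) ^ k)"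
    unfolding dot_def e_def fourier_row_def
    by (auto simp: power_mult[symmetric] power_add[symmetric] algebra_simps intro!: sum.cong)
  also have "\<dots> = (if n dvd (j + m) then of_nat n else 0)"
    by (subst geom_unity) (auto simp: power_mult[symmetric] power_mult_distrib wn w_pow_eq1
        intro: ssubst[OF mult.commute, where P = "\<lambda>x. w ^ x = 1"])
  finally show ?thesis .
qed

lemma neg_lt: "neg m < n" using npos by (simp add: neg_def)
lemma neg_neg: "m < n \<Longrightarrow> neg (neg m) = m"
  unfolding neg_def by (cases "m = 0") (auto simp: mod_if)

lemma dvd_neg: assumes "j < n" "m < n" shows "n dvd (j + m) \<longleftrightarrow> j = neg m"
proof (cases "m = 0")
  case True thus ?thesis using assms by (auto simp: neg_def dest: dvd_imp_le)
next
  case False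
  hence nm: "neg m = n - m" using assms by (simp add: neg_def)
  show ?thesis
  proof
    assume "n dvd j + m"
    then obtain q where q: "j + m = n * q" by auto
    have "n * q < n * 2" using assms q by linarith
    hence "q < 2" by simp
    moreover have "q \<noteq> 0" using q False by (metis add_is_0 mult_0_right)
    ultimately have "q = 1" by auto
    thus "j = neg m" using q nm by auto
  next
    assume "j = neg m" thus "n dvd j + m" using nm assms by simp
  qed
qed


lemma e_eq: "e = fourier_row w n" by (rule ext) (simp add: e_def)

lemma e_out: "k \<ge> n \<Longrightarrow> e j k = 0" by (simp add: e_def fourier_row_def)
lemma e_in: "k < n \<Longrightarrow> e j k = w ^ (j * k)" by (simp add: e_def fourier_row_def)

lemma comb_words: "comb I a \<in> words n"
  by (simp add: words_def comb_def e_out)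

lemma dot_comb:
  assumes "finite I" "I \<subseteq> {..<n}" "m < n"
  shows "dot (comb I a) (e m) = (if neg m \<in> I then of_nat n * a (neg m) else 0)"
proof -
  have "dot (comb I a) (e m) = (\<Sum>k<n. \<Sum>j\<in>I. a j * (e j k * e m k))"
    unfolding dot_def comb_def by (simp add: sum_distrib_right mult.assoc)
  also have "\<dots> = (\<Sum>j\<in>I. a j * dot (e j) (e m))"
    unfolding dot_def by (subst sum.swap) (simp add: sum_distrib_left)
  also have "\<dots> = (\<Sum>j\<in>I. if j = neg m then of_nat n * a j else 0)"
  proof (rule sum.cong[OF refl])
    fix j assume "j \<in> I"
    hence "j < n" using assms by auto
    thus "a j * dot (e j) (e m) = (if j = neg m then of_nat n * a j else 0)"
      using dvd_neg[OF _ assms(3)] by (simp add: dot_e)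
  qed
  also have "\<dots> = (if neg m \<in> I then of_nat n * a (neg m) else 0)"
    using assms(1) by (simp add: sum.delta')
  finally show ?thesis .
qed

lemma dot_e_e: "j < n \<Longrightarrow> m < n \<Longrightarrow> dot (e j) (e m) = (if j = neg m then of_nat n else 0)"
  using dvd_neg by (simp add: dot_e)

lemma inj_e: "inj_on e {..<n}"
proof (rule inj_onI)
  fix j m assume j: "j \<in> {..<n}" and m: "m \<in> {..<n}" and eq: "e j = e m"
  have "dot (e j) (e (neg j)) = dot (e m) (e (neg j))" using eq by simp
  thus "j = m" using j m nz neg_lt neg_neg by (auto simp: dot_e_e split: if_splits)
qed

lemma span_eq:
  assumes "I \<subseteq> {..<n}"
  shows "lin_span (fourier_row w n ` I) = range (comb I)"
proof -
  have inj: "inj_on e I" using inj_e assms by (rule inj_on_subset)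
  have "v \<in> range (comb I)" if vin: "v \<in> lin_span (e ` I)" for v
  proof -
    obtain c where c: "v = (\<lambda>i. \<Sum>g\<in>e ` I. c g * g i)" using vin unfolding lin_span_def by blast
    have "v = comb I (c \<circ> e)" unfolding c comb_def
      by (rule ext) (simp add: sum.reindex[OF inj])
    thus ?thesis by auto
  qed
  moreover have "comb I a \<in> lin_span (e ` I)" for a
  proof -
    define c where "c = (\<lambda>g. a (the_inv_into I e g))"
    have "comb I a = (\<lambda>i. \<Sum>g\<in>e ` I. c g * g i)" unfolding comb_def c_def
      by (rule ext) (simp add: sum.reindex[OF inj] the_inv_into_f_f[OF inj])
    thus ?thesis by (auto simp: lin_span_def)
  qed
  ultimately show ?thesis by (auto simp: e_eq)
qed

lemma w_neg: assumes "j < n" shows "w ^ neg j = inverse (w ^ j)"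
proof -
  have "n dvd neg j + j" using dvd_neg[OF neg_lt assms] by simp
  hence "w ^ neg j * w ^ j = 1" by (simp add: power_add[symmetric] w_pow_eq1)
  thus ?thesis by (simp add: field_simps w_nz)
qed

lemma inversion:
  assumes "v \<in> words n"
  shows "v = comb {..<n} (\<lambda>j. dot v (e (neg j)) / of_nat n)"
proof (rule ext)
  fix k
  show "v k = comb {..<n} (\<lambda>j. dot v (e (neg j)) / of_nat n) k"
  proof (cases "k < n")
    case False thus ?thesis using assms by (simp add: words_def comb_def e_out)
  next
    case k: True
    have key: "e (neg j) l * e j k = (w ^ k / w ^ l) ^ j" if "j < n" "l < n" for j l
    proof -
      have "e (neg j) l * e j k = (w ^ neg j) ^ l * (w ^ j) ^ k"
        using that k by (simp add: e_in power_mult)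
      also have "\<dots> = inverse ((w ^ l) ^ j) * (w ^ k) ^ j"
        using that by (simp add: w_neg power_inverse power_mult[symmetric] mult.commute)
      also have "\<dots> = (w ^ k / w ^ l) ^ j" by (simp add: field_simps power_divide)
      finally show ?thesis .
    qed
    have geo: "(\<Sum>j<n. (w ^ k / w ^ l) ^ j) = (if l = k then of_nat n else 0)" if "l < n" for l
    proof -
      have "(w ^ k / w ^ l) ^ n = 1"
        by (simp add: power_divide power_mult[symmetric] mult.commute[of _ n]) (simp add: power_mult wn w_nz)
      moreover have "w ^ k / w ^ l = 1 \<longleftrightarrow> l = k"
        using w_pow_inj[OF that k] w_nz by auto
      ultimately show ?thesis by (simp add: geom_unity)
    qed
    have "comb {..<n} (\<lambda>j. dot v (e (neg j)) / of_nat n) k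
        = (\<Sum>j<n. \<Sum>l<n. v l * (e (neg j) l * e j k) / of_nat n)"
      unfolding comb_def dot_def by (simp add: sum_divide_distrib sum_distrib_right mult.assoc)
    also have "\<dots> = (\<Sum>l<n. v l / of_nat n * (\<Sum>j<n. (w ^ k / w ^ l) ^ j))"
      by (subst sum.swap) (simp add: key sum_distrib_left)
    also have "\<dots> = (\<Sum>l<n. if l = k then v l else 0)"
      using nz by (intro sum.cong) (auto simp: geo)
    also have "\<dots> = v k" using k by simp
    finally show ?thesis by simp
  qed
qed


lemma comb_diff: "comb I (\<lambda>j. a j - b j) k = comb I a k - comb I b k"
  by (simp add: comb_def sum_subtractf algebra_simps)

lemma comb_zero: "comb I (\<lambda>j. 0) = (\<lambda>_. 0)" by (simp add: comb_def fun_eq_iff)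

lemma e_comb: assumes "finite I" "m \<in> I" shows "e m = comb I (\<lambda>j. if j = m then 1 else 0)"
proof -
  have "(\<Sum>j\<in>I. (if j = m then 1 else 0) * e j x) = (\<Sum>j\<in>I. if j = m then e j x else 0)" for x
    by (rule sum.cong) auto
  then show ?thesis using assms by (simp add: comb_def fun_eq_iff)
qed

lemma dot_comb_right: "dot u (comb I a) = (\<Sum>j\<in>I. a j * dot u (e j))"
  unfolding dot_def comb_def by (simp add: sum_distrib_left sum_distrib_right sum.swap[of _ I] algebra_simps)

lemma dot_sym: "dot u v = dot v u" by (simp add: dot_def mult.commute)

end

locale frc = fr +
  fixes r :: nat
  assumes r1: "n < 2 * r" and r2: "r \<le> n"
begin

definition S :: "nat set" where "S = {r..<n} \<union> {0..n - r}"
definition T :: "nat set" where "T = {n - r + 1..<r}"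
definition phi :: "nat \<Rightarrow> nat" where "phi t = (if t < n - r then r + t else t - (n - r))"
definition psi :: "nat \<Rightarrow> nat" where "psi j = (if r \<le> j then j - r else j + (n - r))"

lemma S_sub: "S \<subseteq> {..<n}" using r1 r2 by (auto simp: S_def)
lemma T_sub: "T \<subseteq> {..<n}" using r1 r2 by (auto simp: T_def)
lemma fin_S: "finite S" by (simp add: S_def)
lemma fin_T: "finite T" by (simp add: T_def)
lemma ST_disj: "S \<inter> T = {}" using r1 r2 by (auto simp: S_def T_def)
lemma ST_un: "S \<union> T = {..<n}" using r1 r2 by (auto simp: S_def T_def)
lemma neg_S: "m \<in> S \<Longrightarrow> neg m \<in> S"
  using r1 r2 by (auto simp: S_def neg_def mod_if)
lemma card_S: "card S = 2 * (n - r) + 1"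
proof -
  have "card S = card {r..<n} + card {0..n - r}"
    unfolding S_def using r1 r2 by (intro card_Un_disjoint) auto
  thus ?thesis by simp
qed

lemma phi_img: "phi ` {..2 * (n - r)} = S"
proof
  show "phi ` {..2 * (n - r)} \<subseteq> S" using r1 r2 by (auto simp: phi_def S_def)
  show "S \<subseteq> phi ` {..2 * (n - r)}"
  proof
    fix j assume j: "j \<in> S"
    have "psi j \<in> {..2 * (n - r)}" "phi (psi j) = j"
      using j r1 r2 by (auto simp: S_def phi_def psi_def)
    thus "j \<in> phi ` {..2 * (n - r)}" by (metis imageI)
  qed
qed

lemma psi_phi: "t \<le> 2 * (n - r) \<Longrightarrow> psi (phi t) = t"
  using r1 r2 by (auto simp: phi_def psi_def)

lemma phi_inj: "inj_on phi {..2 * (n - r)}"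
  by (rule inj_on_inverseI[where g = psi]) (simp add: psi_phi)

lemma comb_S_poly:
  assumes k: "k < n"
  shows "comb S a k = w ^ (r * k) * (\<Sum>t\<le>2 * (n - r). a (phi t) * (w ^ k) ^ t)"
proof -
  have pw: "w ^ (phi t * k) = w ^ (r * k) * (w ^ k) ^ t" for t
  proof (cases "t < n - r")
    case True thus ?thesis by (simp add: phi_def algebra_simps power_add power_mult[symmetric])
  next
    case False
    hence "r + t = phi t + n" using r2 by (simp add: phi_def)
    hence "w ^ (r * k) * (w ^ k) ^ t = w ^ ((phi t + n) * k)"
      by (metis power_add power_mult[symmetric] add_mult_distrib mult.commute)
    also have "\<dots> = w ^ (phi t * k)" by (simp add: add_mult_distrib power_add power_mult wn)
    finally show ?thesis by simp
  qed
  have "comb S a k = (\<Sum>j\<in>phi ` {..2 * (n - r)}. a j * w ^ (j * k))"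
    using k by (simp add: comb_def e_in phi_img)
  also have "\<dots> = (\<Sum>t\<le>2 * (n - r). a (phi t) * w ^ (phi t * k))"
    by (simp add: sum.reindex[OF phi_inj])
  also have "\<dots> = (\<Sum>t\<le>2 * (n - r). w ^ (r * k) * (a (phi t) * (w ^ k) ^ t))"
  proof (rule sum.cong[OF refl])
    fix t
    show "a (phi t) * w ^ (phi t * k) = w ^ (r * k) * (a (phi t) * (w ^ k) ^ t)"
      by (simp only: pw) (simp add: algebra_simps)
  qed
  also have "\<dots> = w ^ (r * k) * (\<Sum>t\<le>2 * (n - r). a (phi t) * (w ^ k) ^ t)"
    by (simp add: sum_distrib_left)
  finally show ?thesis .
qed


definition wt :: "(nat \<Rightarrow> 'a) \<Rightarrow> nat" where "wt v = card {i. i < n \<and> v i \<noteq> 0}"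

lemma wt_lower:
  assumes nzv: "comb S a \<noteq> (\<lambda>_. 0)"
  shows "2 * r - n \<le> wt (comb S a)"
proof -
  define p where "p = (\<Sum>t\<le>2 * (n - r). monom (a (phi t)) t)"
  have pp: "poly p x = (\<Sum>t\<le>2 * (n - r). a (phi t) * x ^ t)" for x
    by (simp add: p_def poly_sum poly_monom)
  have dp: "degree p \<le> 2 * (n - r)" unfolding p_def
    by (rule degree_sum_le) (auto intro: order.trans[OF degree_monom_le])
  have vk: "comb S a k = w ^ (r * k) * poly p (w ^ k)" if "k < n" for k
    using comb_S_poly[OF that] pp by simp
  have p0: "p \<noteq> 0"
  proof
    assume pz: "p = 0"
    have "comb S a k = 0" for k
    proof (cases "k < n")
      case True thus ?thesis using vk pz by simp
    next
      case False thus ?thesis using comb_words[of S a] by (simp add: words_def)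
    qed
    thus False using nzv by auto
  qed
  define Z where "Z = {k. k < n \<and> comb S a k = 0}"
  have Zp: "Z = {k. k < n \<and> poly p (w ^ k) = 0}" using vk w_nz by (auto simp: Z_def)
  have injZ: "inj_on (\<lambda>k. w ^ k) Z" by (rule inj_onI) (auto simp: Z_def intro: w_pow_inj)
  have sub: "(\<lambda>k. w ^ k) ` Z \<subseteq> {x. poly p x = 0}" using Zp by auto
  have "card Z \<le> card {x. poly p x = 0}"
    by (rule card_inj_on_le[OF injZ sub poly_roots_finite[OF p0]])
  also have "\<dots> \<le> degree p" by (rule card_poly_roots_bound[OF p0])
  finally have cZ: "card Z \<le> 2 * (n - r)" using dp by simp
  have Zs: "Z \<subseteq> {..<n}" by (auto simp: Z_def)
  have "{i. i < n \<and> comb S a i \<noteq> 0} = {..<n} - Z" by (auto simp: Z_def)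
  hence "wt (comb S a) = card ({..<n} - Z)" by (simp add: wt_def)
  also have "\<dots> = n - card Z" using Zs by (simp add: card_Diff_subset finite_subset)
  finally have "wt (comb S a) = n - card Z" .
  thus ?thesis using cZ r1 r2 by linarith
qed

lemma wt_attain: "\<exists>a. comb S a \<noteq> (\<lambda>_. 0) \<and> wt (comb S a) = 2 * r - n"
proof -
  define p0 where "p0 = (\<Prod>t<2 * (n - r). [:- (w ^ t), 1:])"
  have "degree p0 \<le> sum (degree \<circ> (\<lambda>t. [:- (w ^ t), 1:])) {..<2 * (n - r)}"
    unfolding p0_def by (rule degree_prod_sum_le) simp
  hence dp: "degree p0 \<le> 2 * (n - r)" by simp
  have eq: "(\<Sum>i\<le>2 * (n - r). monom (coeff p0 i) i) = p0" by (rule poly_as_sum_of_monoms'[OF dp])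
  have pc: "poly p0 x = (\<Sum>i\<le>2 * (n - r). coeff p0 i * x ^ i)" for x
  proof -
    have "poly p0 x = poly (\<Sum>i\<le>2 * (n - r). monom (coeff p0 i) i) x" by (simp only: eq)
    thus ?thesis by (simp add: poly_sum poly_monom)
  qed
  have pprod: "poly p0 x = (\<Prod>t<2 * (n - r). x - w ^ t)" for x
    by (simp add: p0_def poly_prod)
  define a where "a = (\<lambda>j. coeff p0 (psi j))"
  have vk: "comb S a k = w ^ (r * k) * poly p0 (w ^ k)" if "k < n" for k
    using comb_S_poly[OF that] by (simp add: pc a_def psi_phi)
  have z: "comb S a k = 0 \<longleftrightarrow> k < 2 * (n - r)" if k: "k < n" for k
  proof -
    have "comb S a k = 0 \<longleftrightarrow> (\<exists>t<2 * (n - r). w ^ k = w ^ t)"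
      using vk[OF k] w_nz by (auto simp: pprod)
    also have "\<dots> \<longleftrightarrow> k < 2 * (n - r)"
    proof
      assume "\<exists>t<2 * (n - r). w ^ k = w ^ t"
      then obtain t where t: "t < 2 * (n - r)" "w ^ k = w ^ t" by auto
      have "t < n" using t r1 r2 by linarith
      hence "k = t" using w_pow_inj[OF k] t by simp
      thus "k < 2 * (n - r)" using t by simp
    qed auto
    finally show ?thesis .
  qed
  have "{i. i < n \<and> comb S a i \<noteq> 0} = {2 * (n - r)..<n}" using z by auto
  hence w1: "wt (comb S a) = 2 * r - n" unfolding wt_def using r1 r2 by simp
  have "comb S a \<noteq> (\<lambda>_. 0)"
  proof
    assume "comb S a = (\<lambda>_. 0)"
    hence "wt (comb S a) = 0" by (simp add: wt_def)
    thus False using w1 r1 by simp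
  qed
  thus ?thesis using w1 by blast
qed

lemma min_dist_C: "min_dist n (range (comb S)) = 2 * r - n"
  unfolding min_dist_def
proof (rule Min_eqI)
  let ?D = "{hamming_dist n v u |v u. v \<in> range (comb S) \<and> u \<in> range (comb S) \<and> v \<noteq> u}"
  have "?D \<subseteq> {..n}"
  proof
    fix x assume "x \<in> ?D"
    then obtain v u :: "nat \<Rightarrow> 'a" where "x = hamming_dist n v u" by blast
    moreover have "card {i. i < n \<and> v i \<noteq> u i} \<le> card {..<n}" by (rule card_mono) auto
    ultimately show "x \<in> {..n}" by (simp add: hamming_dist_def)
  qed
  thus "finite ?D" by (rule finite_subset) simp
  show "2 * r - n \<le> y" if "y \<in> ?D" for y
  proof -
    obtain a b where y: "y = hamming_dist n (comb S a) (comb S b)" and ne: "comb S a \<noteq> comb S b"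
      using \<open>y \<in> ?D\<close> by auto
    have "comb S (\<lambda>j. a j - b j) \<noteq> (\<lambda>_. 0)"
    proof
      assume "comb S (\<lambda>j. a j - b j) = (\<lambda>_. 0)"
      hence "comb S a k = comb S b k" for k using comb_diff[of S a b k] by simp
      thus False using ne by auto
    qed
    hence "2 * r - n \<le> wt (comb S (\<lambda>j. a j - b j))" by (rule wt_lower)
    moreover have "wt (comb S (\<lambda>j. a j - b j)) = y"
      by (simp add: y wt_def hamming_dist_def comb_diff)
    ultimately show ?thesis by simp
  qed
  obtain a where a: "comb S a \<noteq> (\<lambda>_. 0)" "wt (comb S a) = 2 * r - n" using wt_attain by blast
  have "hamming_dist n (comb S a) (comb S (\<lambda>_. 0)) = 2 * r - n"
    using a by (simp add: comb_zero hamming_dist_def wt_def)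
  moreover have "comb S a \<noteq> comb S (\<lambda>_. 0)" using a by (simp add: comb_zero)
  moreover have "comb S a \<in> range (comb S)" "comb S (\<lambda>_. 0) \<in> range (comb S)" by auto
  ultimately show "2 * r - n \<in> ?D" by (smt (verit) mem_Collect_eq)
qed


lemma eS_C: "m \<in> S \<Longrightarrow> e m \<in> range (comb S)"
  using e_comb[OF fin_S] by blast

lemma comb_S_zero:
  assumes "\<And>m. m \<in> S \<Longrightarrow> dot (comb S a) (e m) = 0"
  shows "comb S a = (\<lambda>_. 0)"
proof -
  have "a j = 0" if j: "j \<in> S" for j
  proof -
    have jn: "j < n" using j S_sub by auto
    have "dot (comb S a) (e (neg j)) = of_nat n * a j"
      using dot_comb[OF fin_S S_sub neg_lt] neg_neg[OF jn] j by simp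
    thus ?thesis using assms[OF neg_S[OF j]] nz by simp
  qed
  hence "comb S a = comb S (\<lambda>_. 0)" unfolding comb_def by (intro ext sum.cong) auto
  thus ?thesis by (simp add: comb_zero)
qed

lemma dual_C: "dual_code n (range (comb S)) = range (comb T)"
proof
  show "dual_code n (range (comb S)) \<subseteq> range (comb T)"
  proof
    fix v assume v: "v \<in> dual_code n (range (comb S))"
    hence vw: "v \<in> words n" and orth: "\<And>c. c \<in> range (comb S) \<Longrightarrow> dot v c = 0"
      by (auto simp: dual_code_def dot_def)
    define \<alpha> where "\<alpha> = (\<lambda>j. dot v (e (neg j)) / of_nat n)"
    have v1: "v = comb {..<n} \<alpha>" unfolding \<alpha>_def by (rule inversion[OF vw])
    have a0: "\<alpha> j = 0" if "j \<in> S" for j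
      using orth[OF eS_C[OF neg_S[OF that]]] by (simp add: \<alpha>_def)
    have "comb {..<n} \<alpha> = comb T \<alpha>"
    proof (rule ext)
      fix k
      have "comb {..<n} \<alpha> k = (\<Sum>j\<in>S. \<alpha> j * e j k) + (\<Sum>j\<in>T. \<alpha> j * e j k)"
        unfolding comb_def ST_un[symmetric] by (rule sum.union_disjoint[OF fin_S fin_T ST_disj])
      thus "comb {..<n} \<alpha> k = comb T \<alpha> k" by (simp add: a0 comb_def)
    qed
    thus "v \<in> range (comb T)" using v1 by auto
  qed
  show "range (comb T) \<subseteq> dual_code n (range (comb S))"
  proof
    fix v assume "v \<in> range (comb T)"
    then obtain b where vb: "v = comb T b" by auto
    have "dot v c = 0" if "c \<in> range (comb S)" for c
    proof -
      obtain a where ca: "c = comb S a" using \<open>c \<in> range (comb S)\<close> by auto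
      have "dot v (e j) = 0" if j: "j \<in> S" for j
      proof -
        have "neg j \<notin> T" using neg_S[OF j] ST_disj by auto
        thus ?thesis using dot_comb[OF fin_T T_sub, of j b] j S_sub vb by auto
      qed
      thus ?thesis by (simp add: ca dot_comb_right)
    qed
    thus "v \<in> dual_code n (range (comb S))"
      using comb_words vb by (auto simp: dual_code_def dot_def)
  qed
qed

lemma LCD_C: "range (comb S) \<inter> dual_code n (range (comb S)) = {\<lambda>_. 0}"
proof
  show "range (comb S) \<inter> dual_code n (range (comb S)) \<subseteq> {\<lambda>_. 0}"
  proof
    fix v assume v: "v \<in> range (comb S) \<inter> dual_code n (range (comb S))"
    then obtain a where va: "v = comb S a" by auto
    have "dot (comb S a) (e m) = 0" if "m \<in> S" for m
      using v eS_C[OF that] va by (auto simp: dual_code_def dot_def)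
    thus "v \<in> {\<lambda>_. 0}" using comb_S_zero va by auto
  qed
  have "(\<lambda>_. 0) \<in> range (comb S)" using comb_zero by (metis rangeI)
  moreover have "(\<lambda>_. 0) \<in> dual_code n (range (comb S))"
    by (simp add: dual_code_def words_def)
  ultimately show "{\<lambda>_. 0} \<subseteq> range (comb S) \<inter> dual_code n (range (comb S))" by auto
qed

lemma dim_C: "code_dim (range (comb S)) (2 * (n - r) + 1)"
  unfolding code_dim_def
proof (intro exI conjI)
  have inj: "inj_on e S" using inj_e S_sub by (rule inj_on_subset)
  show "finite (e ` S)" using fin_S by simp
  show "card (e ` S) = 2 * (n - r) + 1" using card_image[OF inj] card_S by simp
  show "e ` S \<subseteq> range (comb S)" using eS_C by auto
  show "lin_span (e ` S) = range (comb S)" using span_eq[OF S_sub] by (simp add: e_eq)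
  show "lin_indep (e ` S)" unfolding lin_indep_def
  proof (intro allI impI ballI)
    fix c g assume h: "\<forall>i. (\<Sum>g\<in>e ` S. c g * g i) = 0" and g: "g \<in> e ` S"
    have "comb S (c \<circ> e) = (\<lambda>_. 0)"
    proof (rule comb_S_zero)
      fix m assume "m \<in> S"
      have "comb S (c \<circ> e) = (\<lambda>i. \<Sum>g\<in>e ` S. c g * g i)"
        by (simp add: comb_def sum.reindex[OF inj] fun_eq_iff)
      thus "dot (comb S (c \<circ> e)) (e m) = 0" using h by (simp add: dot_def)
    qed
    obtain j where j: "j \<in> S" "g = e j" using g by auto
    have jn: "j < n" using j S_sub by auto
    have "dot (comb S (c \<circ> e)) (e (neg j)) = of_nat n * c (e j)"
      using dot_comb[OF fin_S S_sub neg_lt] neg_neg[OF jn] j by simp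
    thus "c g = 0" using \<open>comb S (c \<circ> e) = (\<lambda>_. 0)\<close> nz j by (simp add: dot_def)
  qed
qed

end

theorem mainTheorem9:
  fixes w :: "'a::{finite,field}" and n r :: nat
  assumes "0 < n"
    and "of_nat n \<noteq> (0::'a)"
    and "primitive_root n w"
    and "n < 2 * r" and "r \<le> n"
  defines "C \<equiv> lin_span (fourier_row w n ` ({r..<n} \<union> {0..n - r}))"
  shows "C \<subseteq> words n \<and> is_LCD n C \<and> is_MDS n C
     \<and> code_dim C (2 * (n - r) + 1) \<and> min_dist n C = 2 * r - n
     \<and> dual_code n C = lin_span (fourier_row w n ` {n - r + 1..<r})"
proof -
  interpret frc w n r using assms by unfold_locales auto
  have CS: "C = range (comb S)" unfolding C_def using span_eq[OF S_sub] by (simp add: S_def)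
  have DT: "lin_span (fourier_row w n ` {n - r + 1..<r}) = range (comb T)"
    using span_eq[OF T_sub] by (simp add: T_def)
  have mds: "is_MDS n C" unfolding is_MDS_def CS
    using dim_C min_dist_C r1 r2 by (intro exI[of _ "2 * (n - r) + 1"]) auto
  show ?thesis unfolding CS DT using comb_words LCD_C mds dim_C min_dist_C dual_C
    by (auto simp: is_LCD_def CS)
qed

end
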